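(* Let $\Phi_1,\Phi_2$ be quantum channels on $\mathcal D_n$ and let $|\psi_+\rangle\in\mathbb C^n\otimes\mathbb C^n$ be any maximally entangled state, with $\Phi_1$ acting on the first and $\Phi_2$ on the second factor. Then $$-\log\Big(1-\big|e^{-S_2^{\mathrm{map}}(\Phi_1)}-e^{-S_2^{\mathrm{map}}(\Phi_2)}\big|\Big)\;\le\; S_2\big((\Phi_1\otimes\Phi_2)(|\psi_+\rangle\langle\psi_+|)\big).$$
   Context: A quantum channel on $\mathcal D_n$ ($n\times n$ density matrices) is a linear, completely positive, trace-preserving map. A maximally entangled state is a unit vector in $\mathbb C^n\otimes\mathbb C^n$ whose reduced density matrices equal $\frac1n\mathbb 1$. The Jamiołkowski state of $\Phi$ is $\sigma^\Phi=(\Phi\otimes\mathrm{id})(|\phi_+\rangle\langle\phi_+|)$ with $|\phi_+\rangle=\frac1{\sqrt n}\sum_i|i\rangle\otimes|i\rangle$. The Renyi-2 entropy is $S_2(\rho)=-\log\operatorname{tr}\rho^2$ and $S_2^{\mathrm{map}}(\Phi)=S_2(\sigma^\Phi)$, so $e^{-S_2^{\mathrm{map}}(\Phi)}=\operatorname{tr}(\sigma^\Phi)^2$. *)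

theory Defs
  imports Complex_Main "Jordan_Normal_Form.Matrix"
begin

text \<open>Matrices are complex matrices from Jordan_Normal_Form. A map on the
  n x n matrices is modelled as a function complex mat to complex mat whose
  behaviour is only constrained on carrier_mat n n.\<close>

definition ctrace :: "complex mat \<Rightarrow> complex" where
  "ctrace A = (\<Sum>i<dim_row A. A $$ (i, i))"

definition psd :: "complex mat \<Rightarrow> bool" where
  "psd A \<longleftrightarrow> A \<in> carrier_mat (dim_row A) (dim_row A) \<and>
     (\<forall>v \<in> carrier_vec (dim_row A).
        \<exists>r::real. r \<ge> 0 \<and>
          (\<Sum>i<dim_row A. \<Sum>j<dim_row A. cnj (v $ i) * A $$ (i, j) * v $ j) = complex_of_real r)"

text \<open>Bipartite index convention: C^n (x) C^m, basis index a*m + b with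
  a < n (first factor) and b < m (second factor).\<close>

text \<open>(Phi (x) id_m) applied to an (n*m) x (n*m) matrix, Phi acting on the
  first factor C^n.\<close>
definition apply_first :: "(complex mat \<Rightarrow> complex mat) \<Rightarrow> nat \<Rightarrow> nat \<Rightarrow> complex mat \<Rightarrow> complex mat" where
  "apply_first \<Phi> n m X = mat (n * m) (n * m) (\<lambda>(i, j).
     \<Phi> (mat n n (\<lambda>(a, a'). X $$ (a * m + i mod m, a' * m + j mod m))) $$ (i div m, j div m))"

text \<open>(id_n (x) Phi) applied to an (n*m) x (n*m) matrix, Phi acting on the
  second factor C^m.\<close>
definition apply_second :: "(complex mat \<Rightarrow> complex mat) \<Rightarrow> nat \<Rightarrow> nat \<Rightarrow> complex mat \<Rightarrow> complex mat" where
  "apply_second \<Phi> n m X = mat (n * m) (n * m) (\<lambda>(i, j).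
     \<Phi> (mat m m (\<lambda>(b, b'). X $$ ((i div m) * m + b, (j div m) * m + b'))) $$ (i mod m, j mod m))"

definition tensor_channel :: "(complex mat \<Rightarrow> complex mat) \<Rightarrow> (complex mat \<Rightarrow> complex mat) \<Rightarrow> nat \<Rightarrow> complex mat \<Rightarrow> complex mat" where
  "tensor_channel \<Phi>1 \<Phi>2 n X = apply_first \<Phi>1 n n (apply_second \<Phi>2 n n X)"

definition quantum_channel :: "nat \<Rightarrow> (complex mat \<Rightarrow> complex mat) \<Rightarrow> bool" where
  "quantum_channel n \<Phi> \<longleftrightarrow>
     (\<forall>A \<in> carrier_mat n n. \<Phi> A \<in> carrier_mat n n) \<and>
     (\<forall>A \<in> carrier_mat n n. \<forall>B \<in> carrier_mat n n. \<Phi> (A + B) = \<Phi> A + \<Phi> B) \<and>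
     (\<forall>c. \<forall>A \<in> carrier_mat n n. \<Phi> (c \<cdot>\<^sub>m A) = c \<cdot>\<^sub>m \<Phi> A) \<and>
     (\<forall>A \<in> carrier_mat n n. ctrace (\<Phi> A) = ctrace A) \<and>
     (\<forall>k. \<forall>X \<in> carrier_mat (n * k) (n * k). psd X \<longrightarrow> psd (apply_first \<Phi> n k X))"

definition outer :: "complex vec \<Rightarrow> complex mat" where
  "outer v = mat (dim_vec v) (dim_vec v) (\<lambda>(i, j). v $ i * cnj (v $ j))"

definition unit_vector :: "complex vec \<Rightarrow> bool" where
  "unit_vector v \<longleftrightarrow> (\<Sum>i<dim_vec v. (cmod (v $ i))\<^sup>2) = 1"

definition ptrace_second :: "nat \<Rightarrow> nat \<Rightarrow> complex mat \<Rightarrow> complex mat" where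
  "ptrace_second n m X = mat n n (\<lambda>(a, a'). \<Sum>b<m. X $$ (a * m + b, a' * m + b))"

definition ptrace_first :: "nat \<Rightarrow> nat \<Rightarrow> complex mat \<Rightarrow> complex mat" where
  "ptrace_first n m X = mat m m (\<lambda>(b, b'). \<Sum>a<n. X $$ (a * m + b, a * m + b'))"

definition maximally_entangled :: "nat \<Rightarrow> complex vec \<Rightarrow> bool" where
  "maximally_entangled n \<psi> \<longleftrightarrow> \<psi> \<in> carrier_vec (n * n) \<and> unit_vector \<psi> \<and>
     ptrace_second n n (outer \<psi>) = (1 / of_nat n) \<cdot>\<^sub>m 1\<^sub>m n \<and>
     ptrace_first n n (outer \<psi>) = (1 / of_nat n) \<cdot>\<^sub>m 1\<^sub>m n"

definition phi_plus :: "nat \<Rightarrow> complex vec" where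
  "phi_plus n = vec (n * n) (\<lambda>i. if i div n = i mod n then complex_of_real (1 / sqrt (real n)) else 0)"

definition jamiolkowski :: "nat \<Rightarrow> (complex mat \<Rightarrow> complex mat) \<Rightarrow> complex mat" where
  "jamiolkowski n \<Phi> = apply_first \<Phi> n n (outer (phi_plus n))"

text \<open>Renyi-2 entropy S_2(rho) = - log tr rho^2 (natural log; tr rho^2 is real
  for Hermitian rho).\<close>
definition renyi2 :: "complex mat \<Rightarrow> real" where
  "renyi2 \<rho> = - ln (Re (ctrace (\<rho> * \<rho>)))"

definition renyi2_map :: "nat \<Rightarrow> (complex mat \<Rightarrow> complex mat) \<Rightarrow> real" where
  "renyi2_map n \<Phi> = renyi2 (jamiolkowski n \<Phi>)"

end

theory Submission
  imports Defs
begin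


definition qf :: "(nat \<Rightarrow> nat \<Rightarrow> complex) \<Rightarrow> nat \<Rightarrow> (nat \<Rightarrow> complex) \<Rightarrow> complex" where
  "qf A N v = (\<Sum>i<N. \<Sum>j<N. cnj (v i) * A i j * v j)"

definition pos_fn :: "(nat \<Rightarrow> nat \<Rightarrow> complex) \<Rightarrow> nat \<Rightarrow> bool" where
  "pos_fn A N \<longleftrightarrow> (\<forall>v. \<exists>r\<ge>0. qf A N v = complex_of_real r)"

lemma sum_delta_mult: "k < (N::nat) \<Longrightarrow> (\<Sum>j<N. f j * (if j = k then 1 else 0)) = (f k :: complex)"
proof -
  assume k: "k < N"
  have "(\<Sum>j<N. f j * (if j = k then 1 else 0)) = (\<Sum>j<N. if j = k then f j else 0)"
    by (rule sum.cong) auto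
  also have "\<dots> = f k" using k by (subst sum.delta) auto
  finally show ?thesis .
qed

lemma qf_add_point:
  assumes k: "k < N"
  shows "qf A N (\<lambda>i. v i + (if i = k then t else 0)) = qf A N v + cnj t * (\<Sum>j<N. A k j * v j)
     + t * (\<Sum>i<N. cnj (v i) * A i k) + cnj t * t * A k k"
proof -
  define d where "d = (\<lambda>i::nat. if i = k then 1 else (0::complex))"
  have e: "cnj (v i + (if i = k then t else 0)) * A i j * (v j + (if j = k then t else 0))
     = cnj (v i) * A i j * v j + (cnj (v i) * A i j * t) * d j + (cnj t * A i j * v j) * d i
       + ((cnj t * A i j * t) * d j) * d i" for i j
    unfolding d_def by (auto simp: algebra_simps)
  have "qf A N (\<lambda>i. v i + (if i = k then t else 0)) = qf A N v
     + (\<Sum>i<N. \<Sum>j<N. (cnj (v i) * A i j * t) * d j)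
     + (\<Sum>i<N. (\<Sum>j<N. cnj t * A i j * v j) * d i)
     + (\<Sum>i<N. (\<Sum>j<N. (cnj t * A i j * t) * d j) * d i)"
    unfolding qf_def e by (simp add: sum.distrib sum_distrib_right)
  also have "\<dots> = qf A N v + (\<Sum>i<N. cnj (v i) * A i k * t) + (\<Sum>j<N. cnj t * A k j * v j)
     + cnj t * A k k * t"
    unfolding d_def using k by (simp add: sum_delta_mult)
  finally show ?thesis by (simp add: sum_distrib_left algebra_simps)
qed

lemma sum_if_eq: "i < (N::nat) \<Longrightarrow> (\<Sum>l<N. if l = i then f l else 0) = (f i :: complex)"
  by (subst sum.delta) auto

lemma qf_zero[simp]: "qf A N (\<lambda>_. 0) = 0"
  by (simp add: qf_def)

lemma qf_point:
  assumes "k < N"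
  shows "qf A N (\<lambda>i. if i = k then t else 0) = cnj t * t * A k k"
  using qf_add_point[OF assms, of A "\<lambda>_. 0" t] by simp

lemma qf_two:
  assumes "i < N" "j < N" "i \<noteq> j"
  shows "qf A N (\<lambda>l. (if l = i then a else 0) + (if l = j then b else 0))
    = cnj a * a * A i i + cnj b * (A j i * a) + b * (cnj a * A i j) + cnj b * b * A j j"
proof -
  have "(\<Sum>l<N. A j l * (if l = i then a else 0)) = (\<Sum>l<N. if l = i then A j l * a else 0)"
    by (rule sum.cong) auto
  hence s1: "(\<Sum>l<N. A j l * (if l = i then a else 0)) = A j i * a"
    using sum_if_eq[OF assms(1)] by simp
  have "(\<Sum>l<N. cnj (if l = i then a else 0) * A l j) = (\<Sum>l<N. if l = i then cnj a * A l j else 0)"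
    by (rule sum.cong) auto
  hence s2: "(\<Sum>l<N. cnj (if l = i then a else 0) * A l j) = cnj a * A i j"
    using sum_if_eq[OF assms(1)] by simp
  show ?thesis using qf_add_point[OF assms(2), of A "\<lambda>l. if l = i then a else 0" b]
    using qf_point[OF assms(1), of A a] s1 s2 by simp
qed

lemma pos_fnD: "pos_fn A N \<Longrightarrow> Im (qf A N v) = 0 \<and> 0 \<le> Re (qf A N v)"
  unfolding pos_fn_def by (metis Im_complex_of_real Re_complex_of_real)

lemma pos_fn_diag:
  assumes "pos_fn A N" "k < N"
  shows "Im (A k k) = 0" "0 \<le> Re (A k k)"
  using pos_fnD[OF assms(1), of "\<lambda>i. if i = k then 1 else 0"] qf_point[OF assms(2), of A 1]
  by auto

lemma pos_fn_herm:
  assumes P: "pos_fn A N" and i: "i < N" and j: "j < N"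
  shows "A j i = cnj (A i j)"
proof (cases "i = j")
  case True
  then show ?thesis using pos_fn_diag[OF P i] by (simp add: complex_eq_iff)
next
  case False
  have "Im (qf A N (\<lambda>l. (if l = i then 1 else 0) + (if l = j then 1 else 0))) = 0"
    using pos_fnD[OF P] by blast
  hence h1: "Im (A j i) + Im (A i j) = 0"
    using qf_two[OF i j False, of A 1 1] pos_fn_diag[OF P i] pos_fn_diag[OF P j] by simp
  have "Im (qf A N (\<lambda>l. (if l = i then 1 else 0) + (if l = j then \<i> else 0))) = 0"
    using pos_fnD[OF P] by blast
  hence h2: "Re (A i j) - Re (A j i) = 0"
    using qf_two[OF i j False, of A 1 \<i>] pos_fn_diag[OF P i] pos_fn_diag[OF P j] by simp
  show ?thesis using h1 h2 by (simp add: complex_eq_iff)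
qed

lemma pos_fn_zero_col:
  assumes P: "pos_fn A N" and k: "k < N" and i: "i < N" and akk: "A k k = 0"
  shows "A i k = 0"
proof (rule ccontr)
  assume nz: "A i k \<noteq> 0"
  hence ik: "i \<noteq> k" using akk by auto
  define z where "z = A i k"
  define c where "c = (cmod z)^2"
  have c: "c > 0" using nz unfolding c_def z_def by simp
  have zc: "z * cnj z = complex_of_real c" unfolding c_def by (simp add: complex_mult_cnj cmod_power2)
  have herm: "A k i = cnj z" using pos_fn_herm[OF P i k] z_def by simp
  define s where "s = (Re (A i i) + 1) / (2 * c)"
  define t where "t = - complex_of_real s * cnj z"
  have "0 \<le> Re (qf A N (\<lambda>l. (if l = i then 1 else 0) + (if l = k then t else 0)))"
    using pos_fnD[OF P] by blast
  also have "qf A N (\<lambda>l. (if l = i then 1 else 0) + (if l = k then t else 0))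
     = A i i + (cnj t * cnj z + t * z)"
    using qf_two[OF i k ik, of A 1 t] herm akk z_def by simp
  also have "cnj t * cnj z + t * z = - 2 * complex_of_real s * (z * cnj z)"
    unfolding t_def by (simp add: algebra_simps)
  also have "Re (A i i + - 2 * complex_of_real s * (z * cnj z)) = Re (A i i) - 2 * s * c"
    unfolding zc by simp
  also have "\<dots> = -1" unfolding s_def using c by (simp add: field_simps)
  finally show False by simp
qed

lemma chol_step:
  assumes P: "pos_fn A N" and k: "k < N" and a: "A k k \<noteq> 0"
  defines "sa \<equiv> sqrt (Re (A k k))"
  defines "u0 \<equiv> \<lambda>i. A i k / complex_of_real sa"
  shows "pos_fn (\<lambda>i j. A i j - u0 i * cnj (u0 j)) N"
proof -
  have im: "Im (A k k) = 0" and re: "0 \<le> Re (A k k)" using pos_fn_diag[OF P k] by auto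
  have rpos: "Re (A k k) > 0" using im re a by (metis complex_eqI less_eq_real_def zero_complex.simps)
  have sa: "sa > 0" unfolding sa_def using rpos by simp
  have sa0: "sa \<noteq> 0" using sa by simp
  have akk: "A k k = complex_of_real sa * complex_of_real sa"
    using im rpos unfolding sa_def by (simp add: complex_eq_iff)
  show ?thesis unfolding pos_fn_def
  proof
    fix v
    define w where "w = (\<Sum>j<N. cnj (u0 j) * v j)"
    define t where "t = - w / complex_of_real sa"
    have cw: "cnj w = (\<Sum>i<N. cnj (v i) * u0 i)" unfolding w_def by (simp add: mult.commute)
    have q1: "qf (\<lambda>i j. A i j - u0 i * cnj (u0 j)) N v = qf A N v - cnj w * w"
    proof -
      have "qf (\<lambda>i j. A i j - u0 i * cnj (u0 j)) N v = qf A N v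
          - (\<Sum>i<N. \<Sum>j<N. (cnj (v i) * u0 i) * (cnj (u0 j) * v j))"
        unfolding qf_def by (simp add: algebra_simps sum_subtractf)
      also have "(\<Sum>i<N. \<Sum>j<N. (cnj (v i) * u0 i) * (cnj (u0 j) * v j)) = cnj w * w"
        unfolding cw w_def by (simp add: sum_product mult.commute)
      finally show ?thesis .
    qed
    have s1: "(\<Sum>j<N. A k j * v j) = complex_of_real sa * w"
    proof -
      have "(\<Sum>j<N. A k j * v j) = (\<Sum>j<N. complex_of_real sa * (cnj (u0 j) * v j))"
        by (rule sum.cong, simp, simp add: u0_def pos_fn_herm[OF P _ k] sa0)
      thus ?thesis unfolding w_def by (simp add: sum_distrib_left)
    qed
    have s2: "(\<Sum>i<N. cnj (v i) * A i k) = complex_of_real sa * cnj w"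
    proof -
      have "(\<Sum>i<N. cnj (v i) * A i k) = (\<Sum>i<N. complex_of_real sa * (cnj (v i) * u0 i))"
        by (rule sum.cong, simp, simp add: u0_def sa0)
      thus ?thesis unfolding cw by (simp add: sum_distrib_left)
    qed
    have "qf A N (\<lambda>i. v i + (if i = k then t else 0)) = qf A N v - cnj w * w"
      unfolding qf_add_point[OF k] s1 s2 akk t_def using sa by (simp add: field_simps)
    hence eq: "qf (\<lambda>i j. A i j - u0 i * cnj (u0 j)) N v = qf A N (\<lambda>i. v i + (if i = k then t else 0))"
      using q1 by simp
    show "\<exists>r\<ge>0. qf (\<lambda>i j. A i j - u0 i * cnj (u0 j)) N v = complex_of_real r"
      unfolding eq using P unfolding pos_fn_def by blast
  qed
qed

lemma chol_aux:
  "\<forall>A k. pos_fn A N \<longrightarrow> N - k = d \<longrightarrow> k \<le> N \<longrightarrow>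
     (\<forall>i<N. \<forall>j<N. (i < k \<or> j < k) \<longrightarrow> A i j = 0) \<longrightarrow>
     (\<exists>(m::nat) u. \<forall>i<N. \<forall>j<N. A i j = (\<Sum>r<m. u r i * cnj (u r j)))"
proof (induction d)
  case 0
  show ?case
  proof (intro allI impI)
    fix A k assume "pos_fn A N" "N - k = 0" "k \<le> N"
      "\<forall>i<N. \<forall>j<N. (i < k \<or> j < k) \<longrightarrow> A i j = 0"
    hence "\<forall>i<N. \<forall>j<N. A i j = 0" by auto
    thus "\<exists>(m::nat) u. \<forall>i<N. \<forall>j<N. A i j = (\<Sum>r<m. u r i * cnj (u r j))"
      by (intro exI[of _ "0::nat"] exI[of _ "\<lambda>_ _. 0"]) simp
  qed
next
  case (Suc d)
  show ?case
  proof (intro allI impI)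
    fix A k assume P: "pos_fn A N" and d: "N - k = Suc d" and kN: "k \<le> N"
      and Z: "\<forall>i<N. \<forall>j<N. (i < k \<or> j < k) \<longrightarrow> A i j = 0"
    have k: "k < N" using d by simp
    have d': "N - Suc k = d" using d by simp
    have k1: "Suc k \<le> N" using k by simp
    have IH: "\<And>A k. pos_fn A N \<Longrightarrow> N - k = d \<Longrightarrow> k \<le> N \<Longrightarrow>
      (\<forall>i<N. \<forall>j<N. (i < k \<or> j < k) \<longrightarrow> A i j = 0) \<Longrightarrow>
      \<exists>(m::nat) u. \<forall>i<N. \<forall>j<N. A i j = (\<Sum>r<m. u r i * cnj (u r j))"
      using Suc.IH by blast
    show "\<exists>(m::nat) u. \<forall>i<N. \<forall>j<N. A i j = (\<Sum>r<m. u r i * cnj (u r j))"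
    proof (cases "A k k = 0")
      case True
      have c1: "A i k = 0" if "i < N" for i using pos_fn_zero_col[OF P k that True] .
      have c2: "A k j = 0" if "j < N" for j using c1[OF that] pos_fn_herm[OF P that k] by simp
      have "\<forall>i<N. \<forall>j<N. (i < Suc k \<or> j < Suc k) \<longrightarrow> A i j = 0"
        using Z c1 c2 less_Suc_eq by auto
      thus ?thesis using IH[OF P d' k1] by blast
    next
      case False
      define sa where "sa = sqrt (Re (A k k))"
      define u0 where "u0 = (\<lambda>i. A i k / complex_of_real sa)"
      define A' where "A' = (\<lambda>i j. A i j - u0 i * cnj (u0 j))"
      have P': "pos_fn A' N" unfolding A'_def u0_def sa_def using chol_step[OF P k False] by simp
      have im: "Im (A k k) = 0" and re: "0 \<le> Re (A k k)" using pos_fn_diag[OF P k] by auto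
      have rpos: "Re (A k k) > 0" using im re False by (metis complex_eqI less_eq_real_def zero_complex.simps)
      have sa: "sa > 0" unfolding sa_def using rpos by simp
      have akk: "A k k = complex_of_real sa * complex_of_real sa"
        using im rpos unfolding sa_def by (simp add: complex_eq_iff)
      have u0z: "u0 i = 0" if "i < N" "i < k" for i using Z that k unfolding u0_def by auto
      have Z': "\<forall>i<N. \<forall>j<N. (i < Suc k \<or> j < Suc k) \<longrightarrow> A' i j = 0"
      proof (intro allI impI)
        fix i j assume i: "i < N" and j: "j < N" and ij: "i < Suc k \<or> j < Suc k"
        show "A' i j = 0"
        proof (cases "i < k \<or> j < k")
          case True
          then show ?thesis using Z i j u0z unfolding A'_def by auto
        next
          case False
          hence "i = k \<or> j = k" using ij by auto
          then show ?thesis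
          proof
            assume "i = k"
            then show ?thesis unfolding A'_def u0_def using pos_fn_herm[OF P j k] akk sa
              by (simp add: field_simps)
          next
            assume "j = k"
            then show ?thesis unfolding A'_def u0_def using akk sa
              by (simp add: field_simps)
          qed
        qed
      qed
      obtain m :: nat and u where mu: "\<forall>i<N. \<forall>j<N. A' i j = (\<Sum>r<m. u r i * cnj (u r j))"
        using IH[OF P' d' k1 Z'] by blast
      define u' where "u' = (\<lambda>r. if r = m then u0 else u r)"
      have "\<forall>i<N. \<forall>j<N. A i j = (\<Sum>r<Suc m. u' r i * cnj (u' r j))"
      proof (intro allI impI)
        fix i j assume i: "i < N" and j: "j < N"
        have "(\<Sum>r<Suc m. u' r i * cnj (u' r j)) = (\<Sum>r<m. u r i * cnj (u r j)) + u0 i * cnj (u0 j)"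
          unfolding u'_def by simp
        also have "\<dots> = A i j"
        proof -
          have "A' i j = (\<Sum>r<m. u r i * cnj (u r j))" using mu i j by blast
          thus ?thesis unfolding A'_def by (metis diff_add_cancel)
        qed
        finally show "A i j = (\<Sum>r<Suc m. u' r i * cnj (u' r j))" by simp
      qed
      thus ?thesis by blast
    qed
  qed
qed

lemma cholesky:
  assumes "pos_fn A N"
  shows "\<exists>(m::nat) u. \<forall>i<N. \<forall>j<N. A i j = (\<Sum>r<m. u r i * cnj (u r j))"
proof -
  have h: "\<forall>i<N. \<forall>j<N. (i < (0::nat) \<or> j < 0) \<longrightarrow> A i j = 0" by simp
  show ?thesis using chol_aux[of N N] assms h by (metis diff_zero le0)
qed



lemma audenaert_sum:
  fixes w :: "'a \<Rightarrow> 'b \<Rightarrow> 'c \<Rightarrow> complex" and X :: "'a set" and Y :: "'b set" and Z :: "'c set"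
  defines "RX \<equiv> \<lambda>a b. \<Sum>y\<in>Y. \<Sum>z\<in>Z. w a y z * cnj (w b y z)"
    and "RY \<equiv> \<lambda>a b. \<Sum>x\<in>X. \<Sum>z\<in>Z. w x a z * cnj (w x b z)"
    and "RZ \<equiv> \<lambda>a b. \<Sum>x\<in>X. \<Sum>y\<in>Y. w x y a * cnj (w x y b)"
    and "N \<equiv> \<Sum>x\<in>X. \<Sum>y\<in>Y. \<Sum>z\<in>Z. w x y z * cnj (w x y z)"
  shows "Re (\<Sum>a\<in>X. \<Sum>b\<in>X. RX a b * RX b a) + Re (\<Sum>a\<in>Y. \<Sum>b\<in>Y. RY a b * RY b a)
     \<le> Re (N * N) + Re (\<Sum>a\<in>Z. \<Sum>b\<in>Z. RZ a b * RZ b a)"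
proof -
  define t where "t = (\<lambda>z z' x1 x2 y1 y2. w x1 y1 z * w x2 y2 z')"
  define T where "T = (\<lambda>z z' x1 x2 y1 y2. t z z' x1 x2 y1 y2 - t z z' x2 x1 y1 y2
      - t z z' x1 x2 y2 y1 + t z z' x2 x1 y2 y1)"
  define S :: "('c \<Rightarrow> 'c \<Rightarrow> 'a \<Rightarrow> 'a \<Rightarrow> 'b \<Rightarrow> 'b \<Rightarrow> complex) \<Rightarrow> complex" where
    "S = (\<lambda>f. \<Sum>z\<in>Z. \<Sum>z'\<in>Z. \<Sum>x1\<in>X. \<Sum>x2\<in>X. \<Sum>y1\<in>Y. \<Sum>y2\<in>Y. f z z' x1 x2 y1 y2)"
  have Sx: "S f = S (\<lambda>z z' x1 x2 y1 y2. f z z' x2 x1 y1 y2)" for f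
    unfolding S_def sum.cartesian_product
    by (rule sum.reindex_bij_witness[where i="\<lambda>(z,z',x1,x2,y1,y2). (z,z',x2,x1,y1,y2)"
          and j="\<lambda>(z,z',x1,x2,y1,y2). (z,z',x2,x1,y1,y2)"]) auto
  have Sy: "S f = S (\<lambda>z z' x1 x2 y1 y2. f z z' x1 x2 y2 y1)" for f
    unfolding S_def sum.cartesian_product
    by (rule sum.reindex_bij_witness[where i="\<lambda>(z,z',x1,x2,y1,y2). (z,z',x1,x2,y2,y1)"
          and j="\<lambda>(z,z',x1,x2,y1,y2). (z,z',x1,x2,y2,y1)"]) auto
  have Sadd: "S (\<lambda>z z' x1 x2 y1 y2. f z z' x1 x2 y1 y2 + g z z' x1 x2 y1 y2) = S f + S g" for f g
    unfolding S_def by (simp add: sum.distrib)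
  have Ssub: "S (\<lambda>z z' x1 x2 y1 y2. f z z' x1 x2 y1 y2 - g z z' x1 x2 y1 y2) = S f - S g" for f g
    unfolding S_def by (simp add: sum_subtractf)
  have Sneg: "S (\<lambda>z z' x1 x2 y1 y2. - f z z' x1 x2 y1 y2) = - S f" for f
    unfolding S_def by (simp add: sum_negf)
  have Tx: "T z z' x2 x1 y1 y2 = - T z z' x1 x2 y1 y2" for z z' x1 x2 y1 y2
    unfolding T_def by simp
  have Ty: "T z z' x1 x2 y2 y1 = - T z z' x1 x2 y1 y2" for z z' x1 x2 y1 y2
    unfolding T_def by simp
  define tT where "tT = (\<lambda>z z' x1 x2 y1 y2. t z z' x1 x2 y1 y2 * cnj (T z z' x1 x2 y1 y2))"
  have e2: "S (\<lambda>z z' x1 x2 y1 y2. t z z' x2 x1 y1 y2 * cnj (T z z' x1 x2 y1 y2)) = - S tT"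
  proof -
    have "S (\<lambda>z z' x1 x2 y1 y2. t z z' x2 x1 y1 y2 * cnj (T z z' x1 x2 y1 y2))
       = S (\<lambda>z z' x1 x2 y1 y2. t z z' x1 x2 y1 y2 * cnj (T z z' x2 x1 y1 y2))"
      by (subst Sx) simp
    also have "\<dots> = S (\<lambda>z z' x1 x2 y1 y2. - tT z z' x1 x2 y1 y2)"
      by (rule arg_cong[where f=S], intro ext, subst Tx, simp add: tT_def)
    finally show ?thesis using Sneg by simp
  qed
  have e3: "S (\<lambda>z z' x1 x2 y1 y2. t z z' x1 x2 y2 y1 * cnj (T z z' x1 x2 y1 y2)) = - S tT"
  proof -
    have "S (\<lambda>z z' x1 x2 y1 y2. t z z' x1 x2 y2 y1 * cnj (T z z' x1 x2 y1 y2))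
       = S (\<lambda>z z' x1 x2 y1 y2. t z z' x1 x2 y1 y2 * cnj (T z z' x1 x2 y2 y1))"
      by (subst Sy) simp
    also have "\<dots> = S (\<lambda>z z' x1 x2 y1 y2. - tT z z' x1 x2 y1 y2)"
      by (rule arg_cong[where f=S], intro ext, subst Ty, simp add: tT_def)
    finally show ?thesis using Sneg by simp
  qed
  have e4: "S (\<lambda>z z' x1 x2 y1 y2. t z z' x2 x1 y2 y1 * cnj (T z z' x1 x2 y1 y2)) = S tT"
  proof -
    have "S (\<lambda>z z' x1 x2 y1 y2. t z z' x2 x1 y2 y1 * cnj (T z z' x1 x2 y1 y2))
       = S (\<lambda>z z' x1 x2 y1 y2. t z z' x1 x2 y2 y1 * cnj (T z z' x2 x1 y1 y2))"
      by (subst Sx) simp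
    also have "\<dots> = S (\<lambda>z z' x1 x2 y1 y2. t z z' x1 x2 y1 y2 * cnj (T z z' x2 x1 y2 y1))"
      by (subst Sy) simp
    also have "\<dots> = S tT"
      by (rule arg_cong[where f=S], intro ext, subst Tx, subst Ty, simp add: tT_def)
    finally show ?thesis .
  qed
  have TT: "S (\<lambda>z z' x1 x2 y1 y2. T z z' x1 x2 y1 y2 * cnj (T z z' x1 x2 y1 y2)) = 4 * S tT"
  proof -
    have "S (\<lambda>z z' x1 x2 y1 y2. T z z' x1 x2 y1 y2 * cnj (T z z' x1 x2 y1 y2))
      = S tT - S (\<lambda>z z' x1 x2 y1 y2. t z z' x2 x1 y1 y2 * cnj (T z z' x1 x2 y1 y2))
        - S (\<lambda>z z' x1 x2 y1 y2. t z z' x1 x2 y2 y1 * cnj (T z z' x1 x2 y1 y2))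
        + S (\<lambda>z z' x1 x2 y1 y2. t z z' x2 x1 y2 y1 * cnj (T z z' x1 x2 y1 y2))"
      unfolding Sadd[symmetric] Ssub[symmetric] tT_def
      by (simp add: T_def[of ] algebra_simps)
    thus ?thesis using e2 e3 e4 by simp
  qed
  have i1: "S (\<lambda>z z' x1 x2 y1 y2. t z z' x1 x2 y1 y2 * cnj (t z z' x1 x2 y1 y2)) = N * N"
    unfolding S_def t_def N_def sum_product sum.cartesian_product
    by (rule sum.reindex_bij_witness[where i="\<lambda>((x1,y1,z),(x2,y2,z')). (z,z',x1,x2,y1,y2)"
          and j="\<lambda>(z,z',x1,x2,y1,y2). ((x1,y1,z),(x2,y2,z'))"]) (auto simp: mult_ac)
  have i2: "S (\<lambda>z z' x1 x2 y1 y2. t z z' x1 x2 y1 y2 * cnj (t z z' x2 x1 y1 y2))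
     = (\<Sum>a\<in>X. \<Sum>b\<in>X. RX a b * RX b a)"
    unfolding S_def t_def RX_def sum_product sum.cartesian_product
    by (rule sum.reindex_bij_witness[where i="\<lambda>(x1,x2,(y1,z),(y2,z')). (z,z',x1,x2,y1,y2)"
          and j="\<lambda>(z,z',x1,x2,y1,y2). (x1,x2,(y1,z),(y2,z'))"]) (auto simp: mult_ac)
  have i3: "S (\<lambda>z z' x1 x2 y1 y2. t z z' x1 x2 y1 y2 * cnj (t z z' x1 x2 y2 y1))
     = (\<Sum>a\<in>Y. \<Sum>b\<in>Y. RY a b * RY b a)"
    unfolding S_def t_def RY_def sum_product sum.cartesian_product
    by (rule sum.reindex_bij_witness[where i="\<lambda>(y1,y2,(x1,z),(x2,z')). (z,z',x1,x2,y1,y2)"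
          and j="\<lambda>(z,z',x1,x2,y1,y2). (y1,y2,(x1,z),(x2,z'))"]) (auto simp: mult_ac)
  have i4: "S (\<lambda>z z' x1 x2 y1 y2. t z z' x1 x2 y1 y2 * cnj (t z z' x2 x1 y2 y1))
     = (\<Sum>a\<in>Z. \<Sum>b\<in>Z. RZ a b * RZ b a)"
    unfolding S_def t_def RZ_def sum_product sum.cartesian_product
    by (rule sum.reindex_bij_witness[where i="\<lambda>(z,z',(x1,y1),(x2,y2)). (z,z',x1,x2,y1,y2)"
          and j="\<lambda>(z,z',x1,x2,y1,y2). (z,z',(x1,y1),(x2,y2))"]) (auto simp: mult_ac)
  have tTval: "S tT = N * N - (\<Sum>a\<in>X. \<Sum>b\<in>X. RX a b * RX b a)
      - (\<Sum>a\<in>Y. \<Sum>b\<in>Y. RY a b * RY b a) + (\<Sum>a\<in>Z. \<Sum>b\<in>Z. RZ a b * RZ b a)"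
  proof -
    have "S tT = S (\<lambda>z z' x1 x2 y1 y2. t z z' x1 x2 y1 y2 * cnj (t z z' x1 x2 y1 y2))
      - S (\<lambda>z z' x1 x2 y1 y2. t z z' x1 x2 y1 y2 * cnj (t z z' x2 x1 y1 y2))
      - S (\<lambda>z z' x1 x2 y1 y2. t z z' x1 x2 y1 y2 * cnj (t z z' x1 x2 y2 y1))
      + S (\<lambda>z z' x1 x2 y1 y2. t z z' x1 x2 y1 y2 * cnj (t z z' x2 x1 y2 y1))"
      unfolding Sadd[symmetric] Ssub[symmetric] tT_def T_def
      by (simp add: algebra_simps)
    thus ?thesis using i1 i2 i3 i4 by simp
  qed
  have pos: "0 \<le> Re (S (\<lambda>z z' x1 x2 y1 y2. T z z' x1 x2 y1 y2 * cnj (T z z' x1 x2 y1 y2)))"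
    unfolding S_def by (simp add: sum_nonneg)
  from pos TT tTval show ?thesis by simp
qed



lemma psd_pos_fn:
  assumes "psd A" "A \<in> carrier_mat N N"
  shows "pos_fn (\<lambda>i j. A $$ (i, j)) N"
  unfolding pos_fn_def
proof
  fix v :: "nat \<Rightarrow> complex"
  have d: "dim_row A = N" using assms(2) by simp
  obtain r where r: "r \<ge> 0" "(\<Sum>i<N. \<Sum>j<N. cnj (vec N v $ i) * A $$ (i, j) * vec N v $ j) = complex_of_real r"
    using assms(1) unfolding psd_def d by (meson vec_carrier)
  have "qf (\<lambda>i j. A $$ (i, j)) N v = (\<Sum>i<N. \<Sum>j<N. cnj (vec N v $ i) * A $$ (i, j) * vec N v $ j)"
    unfolding qf_def by (intro sum.cong refl) simp
  thus "\<exists>r\<ge>0. qf (\<lambda>i j. A $$ (i, j)) N v = complex_of_real r" using r by auto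
qed

lemma outer_carrier[simp]: "outer v \<in> carrier_mat (dim_vec v) (dim_vec v)"
  unfolding outer_def by simp

lemma psd_outer: "psd (outer v)"
proof -
  let ?d = "dim_vec v"
  have dr: "dim_row (outer v) = ?d" unfolding outer_def by simp
  show ?thesis unfolding psd_def dr
  proof (intro conjI ballI)
    show "outer v \<in> carrier_mat ?d ?d" by simp
    fix x :: "complex vec" assume x: "x \<in> carrier_vec ?d"
    define s where "s = (\<Sum>i<?d. cnj (x $ i) * v $ i)"
    have "(\<Sum>i<?d. \<Sum>j<?d. cnj (x $ i) * outer v $$ (i, j) * x $ j)
       = (\<Sum>i<?d. \<Sum>j<?d. (cnj (x $ i) * v $ i) * (cnj (v $ j) * x $ j))"
      unfolding outer_def by (intro sum.cong refl) (simp add: algebra_simps)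
    also have "\<dots> = s * cnj s" unfolding s_def cnj_sum by (simp add: sum_product mult_ac)
    also have "\<dots> = complex_of_real ((cmod s)^2)" by (simp add: complex_mult_cnj cmod_power2)
    finally have "(\<Sum>i<?d. \<Sum>j<?d. cnj (x $ i) * outer v $$ (i, j) * x $ j) = complex_of_real ((cmod s)^2)" .
    thus "\<exists>r\<ge>0. (\<Sum>i<?d. \<Sum>j<?d. cnj (x $ i) * outer v $$ (i, j) * x $ j) = complex_of_real r"
      using zero_le_power2[of "cmod s"] by blast
  qed
qed

lemma idx_less: "i < n \<Longrightarrow> c < n \<Longrightarrow> i * n + c < n * (n::nat)"
proof -
  assume a: "i < n" "c < n"
  have "i * n + c < Suc i * n" using a by simp
  also have "\<dots> \<le> n * n" using mult_le_mono1[OF Suc_leI[OF a(1)], of n] by simp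
  finally show ?thesis .
qed

lemma idx_div[simp]: "c < n \<Longrightarrow> (i * n + c) div n = (i::nat)"
  by simp

lemma idx_mod[simp]: "c < n \<Longrightarrow> (i * n + c) mod n = (c::nat)"
  by simp

definition Emat :: "nat \<Rightarrow> nat \<Rightarrow> nat \<Rightarrow> complex mat" where
  "Emat n c c' = mat n n (\<lambda>(a, a'). if a = c \<and> a' = c' then 1 else 0)"

lemma Emat_carrier[simp]: "Emat n c c' \<in> carrier_mat n n"
  unfolding Emat_def by simp

lemma qc_carrier: "quantum_channel n \<Phi> \<Longrightarrow> A \<in> carrier_mat n n \<Longrightarrow> \<Phi> A \<in> carrier_mat n n"
  unfolding quantum_channel_def by blast

lemma qc_add: "quantum_channel n \<Phi> \<Longrightarrow> A \<in> carrier_mat n n \<Longrightarrow> B \<in> carrier_mat n n \<Longrightarrow> \<Phi> (A + B) = \<Phi> A + \<Phi> B"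
  unfolding quantum_channel_def by blast

lemma qc_smult: "quantum_channel n \<Phi> \<Longrightarrow> A \<in> carrier_mat n n \<Longrightarrow> \<Phi> (c \<cdot>\<^sub>m A) = c \<cdot>\<^sub>m \<Phi> A"
  unfolding quantum_channel_def by blast

lemma qc_trace: "quantum_channel n \<Phi> \<Longrightarrow> A \<in> carrier_mat n n \<Longrightarrow> ctrace (\<Phi> A) = ctrace A"
  unfolding quantum_channel_def by blast

lemma qc_cp: "quantum_channel n \<Phi> \<Longrightarrow> X \<in> carrier_mat (n * k) (n * k) \<Longrightarrow> psd X \<Longrightarrow> psd (apply_first \<Phi> n k X)"
  unfolding quantum_channel_def by blast

lemma lin_aux:
  assumes Q: "quantum_channel n \<Phi>" and X: "X \<in> carrier_mat n n"
    and S: "finite S" "S \<subseteq> {..<n} \<times> {..<n}"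
  shows "\<Phi> (mat n n (\<lambda>p. if p \<in> S then X $$ p else 0)) \<in> carrier_mat n n \<and>
    (\<forall>i<n. \<forall>j<n. \<Phi> (mat n n (\<lambda>p. if p \<in> S then X $$ p else 0)) $$ (i, j)
        = (\<Sum>p\<in>S. X $$ p * \<Phi> (Emat n (fst p) (snd p)) $$ (i, j)))"
  using S
proof (induction S rule: finite_induct)
  case empty
  have z: "mat n n (\<lambda>p. if p \<in> {} then X $$ p else 0) = 0 \<cdot>\<^sub>m (0\<^sub>m n n :: complex mat)"
    by (rule eq_matI) auto
  have c0: "\<Phi> (0\<^sub>m n n) \<in> carrier_mat n n" using qc_carrier[OF Q] by simp
  show ?case unfolding z qc_smult[OF Q zero_carrier_mat] using c0 by auto
next
  case (insert p S)
  obtain c c' where p: "p = (c, c')" by fastforce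
  have pc: "c < n" "c' < n" using insert.prems p by auto
  have SS: "S \<subseteq> {..<n} \<times> {..<n}" using insert.prems by auto
  note IH = insert.IH[OF SS]
  let ?M = "mat n n (\<lambda>p. if p \<in> S then X $$ p else 0)"
  have eq: "mat n n (\<lambda>q. if q \<in> insert p S then X $$ q else 0)
     = ?M + X $$ p \<cdot>\<^sub>m Emat n c c'"
    by (rule eq_matI) (use insert.hyps p in \<open>auto simp: Emat_def\<close>)
  have Mc: "?M \<in> carrier_mat n n" by simp
  have E: "Emat n c c' \<in> carrier_mat n n" by simp
  have phi: "\<Phi> (?M + X $$ p \<cdot>\<^sub>m Emat n c c') = \<Phi> ?M + X $$ p \<cdot>\<^sub>m \<Phi> (Emat n c c')"
    using qc_add[OF Q Mc smult_carrier_mat[OF E]] qc_smult[OF Q E] by simp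
  have cE: "\<Phi> (Emat n c c') \<in> carrier_mat n n" using qc_carrier[OF Q E] .
  have cM: "\<Phi> ?M \<in> carrier_mat n n" using IH by blast
  show ?case unfolding eq phi
  proof (intro conjI allI impI)
    show "\<Phi> ?M + X $$ p \<cdot>\<^sub>m \<Phi> (Emat n c c') \<in> carrier_mat n n" using cE cM by simp
    fix i j assume i: "i < n" and j: "j < n"
    have "(\<Phi> ?M + X $$ p \<cdot>\<^sub>m \<Phi> (Emat n c c')) $$ (i, j) = \<Phi> ?M $$ (i, j) + X $$ p * \<Phi> (Emat n c c') $$ (i, j)"
      using cE cM i j by simp
    also have "\<dots> = (\<Sum>q\<in>S. X $$ q * \<Phi> (Emat n (fst q) (snd q)) $$ (i, j)) + X $$ p * \<Phi> (Emat n c c') $$ (i, j)"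
      using IH i j by simp
    also have "\<dots> = (\<Sum>q\<in>insert p S. X $$ q * \<Phi> (Emat n (fst q) (snd q)) $$ (i, j))"
      using insert.hyps p by simp
    finally show "(\<Phi> ?M + X $$ p \<cdot>\<^sub>m \<Phi> (Emat n c c')) $$ (i, j) = (\<Sum>q\<in>insert p S. X $$ q * \<Phi> (Emat n (fst q) (snd q)) $$ (i, j))" .
  qed
qed

lemma lin_expand:
  assumes Q: "quantum_channel n \<Phi>" and X: "X \<in> carrier_mat n n" and i: "i < n" and j: "j < n"
  shows "\<Phi> X $$ (i, j) = (\<Sum>c<n. \<Sum>c'<n. X $$ (c, c') * \<Phi> (Emat n c c') $$ (i, j))"
proof -
  have eq: "mat n n (\<lambda>p. if p \<in> {..<n} \<times> {..<n} then X $$ p else 0) = X"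
    by (rule eq_matI) (use X in auto)
  from lin_aux[OF Q X, of "{..<n} \<times> {..<n}"] i j
  have "\<Phi> X $$ (i, j) = (\<Sum>p\<in>{..<n} \<times> {..<n}. X $$ p * \<Phi> (Emat n (fst p) (snd p)) $$ (i, j))"
    unfolding eq by auto
  also have "\<dots> = (\<Sum>(c, c')\<in>{..<n} \<times> {..<n}. X $$ (c, c') * \<Phi> (Emat n c c') $$ (i, j))"
    by (rule sum.cong) auto
  also have "\<dots> = (\<Sum>c<n. \<Sum>c'<n. X $$ (c, c') * \<Phi> (Emat n c c') $$ (i, j))"
    by (simp add: sum.cartesian_product)
  finally show ?thesis .
qed



lemma sum_swap3: "(\<Sum>a\<in>A. \<Sum>b\<in>B. \<Sum>c\<in>C. f a b c) = (\<Sum>c\<in>C. \<Sum>a\<in>A. \<Sum>b\<in>B. f a b c)"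
proof -
  have "(\<Sum>a\<in>A. \<Sum>b\<in>B. \<Sum>c\<in>C. f a b c) = (\<Sum>a\<in>A. \<Sum>c\<in>C. \<Sum>b\<in>B. f a b c)"
    by (rule sum.cong[OF refl], rule sum.swap)
  also have "\<dots> = (\<Sum>c\<in>C. \<Sum>a\<in>A. \<Sum>b\<in>B. f a b c)" by (rule sum.swap)
  finally show ?thesis .
qed

lemma phi_plus_dim[simp]: "dim_vec (phi_plus n) = n * n"
  unfolding phi_plus_def by simp

lemma phi_plus_idx: "a < n \<Longrightarrow> c < n \<Longrightarrow>
  phi_plus n $ (a * n + c) = (if a = c then complex_of_real (1 / sqrt (real n)) else 0)"
  unfolding phi_plus_def using idx_less[of a n c] by simp

lemma inv_sqrt_sq: "n > 0 \<Longrightarrow> complex_of_real (1 / sqrt (real n)) * cnj (complex_of_real (1 / sqrt (real n))) = 1 / of_nat n"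
proof -
  assume n: "n > 0"
  have "1 / sqrt (real n) * (1 / sqrt (real n)) = 1 / real n" using n by simp
  have "complex_of_real (1 / sqrt (real n)) * cnj (complex_of_real (1 / sqrt (real n)))
     = complex_of_real (1 / sqrt (real n)) * complex_of_real (1 / sqrt (real n))" by simp
  also have "\<dots> = complex_of_real (1 / sqrt (real n) * (1 / sqrt (real n)))" by (rule of_real_mult[symmetric])
  also have "\<dots> = complex_of_real (1 / real n)" using n by simp
  also have "\<dots> = 1 / of_nat n" by simp
  finally show ?thesis .
qed

lemma jam_entry:
  assumes Q: "quantum_channel n \<Phi>" and i: "i < n" and j: "j < n" and c: "c < n" and c': "c' < n"
  shows "apply_first \<Phi> n n (outer (phi_plus n)) $$ (i * n + c, j * n + c') = 1 / of_nat n * \<Phi> (Emat n c c') $$ (i, j)"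
proof -
  have n: "n > 0" using i by simp
  have inner: "mat n n (\<lambda>(a, a'). outer (phi_plus n) $$ (a * n + (i * n + c) mod n, a' * n + (j * n + c') mod n))
     = (1 / of_nat n) \<cdot>\<^sub>m Emat n c c'"
  proof (rule eq_matI)
    fix a a' assume a: "a < dim_row ((1 / of_nat n) \<cdot>\<^sub>m Emat n c c')" and a': "a' < dim_col ((1 / of_nat n) \<cdot>\<^sub>m Emat n c c')"
    hence a: "a < n" and a': "a' < n" by (auto simp: Emat_def)
    have l1: "a * n + c < dim_vec (phi_plus n)" using idx_less[OF a c] by simp
    have l2: "a' * n + c' < dim_vec (phi_plus n)" using idx_less[OF a' c'] by simp
    show "mat n n (\<lambda>(a, a'). outer (phi_plus n) $$ (a * n + (i * n + c) mod n, a' * n + (j * n + c') mod n)) $$ (a, a')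
      = ((1 / of_nat n) \<cdot>\<^sub>m Emat n c c') $$ (a, a')"
      using a a' c c' l1 l2 inv_sqrt_sq[OF n]
      by (simp add: outer_def phi_plus_idx Emat_def)
  qed (auto simp: Emat_def)
  have "apply_first \<Phi> n n (outer (phi_plus n)) $$ (i * n + c, j * n + c')
     = \<Phi> (mat n n (\<lambda>(a, a'). outer (phi_plus n) $$ (a * n + (i * n + c) mod n, a' * n + (j * n + c') mod n))) $$ (i, j)"
    unfolding apply_first_def using idx_less[OF i c] idx_less[OF j c'] c c' by simp
  also have "\<dots> = ((1 / of_nat n) \<cdot>\<^sub>m \<Phi> (Emat n c c')) $$ (i, j)"
    unfolding inner qc_smult[OF Q Emat_carrier] ..
  also have "\<dots> = 1 / of_nat n * \<Phi> (Emat n c c') $$ (i, j)"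
    using qc_carrier[OF Q Emat_carrier, of c c'] i j by simp
  finally show ?thesis .
qed

lemma ctrace_Emat: "c < n \<Longrightarrow> c' < n \<Longrightarrow> ctrace (Emat n c c') = (if c = c' then 1 else 0)"
proof -
  assume c: "c < n" and c': "c' < n"
  show ?thesis
  proof (cases "c = c'")
    case True
    have "ctrace (Emat n c c') = (\<Sum>i<n. if i = c then 1 else 0)"
      unfolding ctrace_def Emat_def using True by (intro sum.cong) auto
    also have "\<dots> = 1" using sum_if_eq[OF c, of "\<lambda>_. 1"] by simp
    finally show ?thesis using True by simp
  next
    case False
    have "ctrace (Emat n c c') = (\<Sum>i<n. 0)"
      unfolding ctrace_def Emat_def using False by (intro sum.cong) auto
    thus ?thesis using False by simp
  qed
qed

lemma kraus:
  assumes Q: "quantum_channel n \<Phi>"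
  obtains m :: nat and K where
    "\<And>X i j. X \<in> carrier_mat n n \<Longrightarrow> i < n \<Longrightarrow> j < n \<Longrightarrow>
       \<Phi> X $$ (i, j) = (\<Sum>r<m. \<Sum>c<n. \<Sum>c'<n. K r i c * X $$ (c, c') * cnj (K r j c'))"
    and "\<And>c c'. c < n \<Longrightarrow> c' < n \<Longrightarrow> (\<Sum>r<m. \<Sum>i<n. K r i c * cnj (K r i c')) = (if c = c' then 1 else 0)"
proof -
  define J where "J = apply_first \<Phi> n n (outer (phi_plus n))"
  have Jc: "J \<in> carrier_mat (n * n) (n * n)" unfolding J_def apply_first_def by simp
  have "psd J" unfolding J_def
    by (rule qc_cp[OF Q _ psd_outer]) (metis outer_carrier phi_plus_dim)
  from cholesky[OF psd_pos_fn[OF this Jc]]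
  obtain m :: nat and u where mu: "\<forall>i<n*n. \<forall>j<n*n. J $$ (i, j) = (\<Sum>r<m. u r i * cnj (u r j))" by blast
  define K where "K = (\<lambda>r i c. complex_of_real (sqrt (real n)) * u r (i * n + c))"
  have E: "\<Phi> (Emat n c c') $$ (i, j) = (\<Sum>r<m. K r i c * cnj (K r j c'))"
    if i: "i < n" and j: "j < n" and c: "c < n" and c': "c' < n" for i j c c'
  proof -
    have n: "n > 0" using i by simp
    have "\<Phi> (Emat n c c') $$ (i, j) = of_nat n * J $$ (i * n + c, j * n + c')"
      unfolding J_def jam_entry[OF Q i j c c'] using n by simp
    also have "\<dots> = of_nat n * (\<Sum>r<m. u r (i * n + c) * cnj (u r (j * n + c')))"
      using mu idx_less[OF i c] idx_less[OF j c'] by simp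
    also have "\<dots> = (\<Sum>r<m. K r i c * cnj (K r j c'))"
    proof -
      have "complex_of_real (sqrt (real n)) * complex_of_real (sqrt (real n)) = of_nat n"
        by (simp del: of_real_mult add: of_real_mult[symmetric])
      note h = this
      have pt: "K r i c * cnj (K r j c') = of_nat n * (u r (i * n + c) * cnj (u r (j * n + c')))" for r
      proof -
        have "K r i c * cnj (K r j c') = (complex_of_real (sqrt (real n)) * complex_of_real (sqrt (real n)))
            * (u r (i * n + c) * cnj (u r (j * n + c')))" unfolding K_def by (simp add: mult_ac)
        thus ?thesis unfolding h .
      qed
      show ?thesis unfolding pt by (simp add: sum_distrib_left)
    qed
    finally show ?thesis .
  qed
  show ?thesis
  proof (rule that)
    fix X :: "complex mat" and i j assume X: "X \<in> carrier_mat n n" and i: "i < n" and j: "j < n"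
    have "\<Phi> X $$ (i, j) = (\<Sum>c<n. \<Sum>c'<n. X $$ (c, c') * (\<Sum>r<m. K r i c * cnj (K r j c')))"
      unfolding lin_expand[OF Q X i j] using E i j by simp
    also have "\<dots> = (\<Sum>c<n. \<Sum>c'<n. \<Sum>r<m. K r i c * X $$ (c, c') * cnj (K r j c'))"
      by (simp add: sum_distrib_left algebra_simps)
    also have "\<dots> = (\<Sum>r<m. \<Sum>c<n. \<Sum>c'<n. K r i c * X $$ (c, c') * cnj (K r j c'))"
      by (rule sum_swap3)
    finally show "\<Phi> X $$ (i, j) = (\<Sum>r<m. \<Sum>c<n. \<Sum>c'<n. K r i c * X $$ (c, c') * cnj (K r j c'))" .
  next
    fix c c' assume c: "c < n" and c': "c' < n"
    have "(if c = c' then 1 else 0) = ctrace (\<Phi> (Emat n c c'))"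
      using qc_trace[OF Q Emat_carrier] ctrace_Emat[OF c c'] by simp
    also have "\<dots> = (\<Sum>i<n. \<Phi> (Emat n c c') $$ (i, i))"
      unfolding ctrace_def using qc_carrier[OF Q Emat_carrier, of c c'] by simp
    also have "\<dots> = (\<Sum>i<n. \<Sum>r<m. K r i c * cnj (K r i c'))"
      using E c c' by simp
    also have "\<dots> = (\<Sum>r<m. \<Sum>i<n. K r i c * cnj (K r i c'))" by (rule sum.swap)
    finally show "(\<Sum>r<m. \<Sum>i<n. K r i c * cnj (K r i c')) = (if c = c' then 1 else 0)" by simp
  qed
qed



lemma kraus_apply:
  assumes kr: "\<And>X i j. X \<in> carrier_mat n n \<Longrightarrow> i < n \<Longrightarrow> j < n \<Longrightarrow>
       \<Phi> X $$ (i, j) = (\<Sum>r<m. \<Sum>c<n. \<Sum>c'<n. K r i c * X $$ (c, c') * cnj (K r j c'))"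
    and X: "X \<in> carrier_mat n n" and i: "i < n" and j: "j < n"
    and Xe: "\<And>c c'. c < n \<Longrightarrow> c' < n \<Longrightarrow> X $$ (c, c') = (\<Sum>s\<in>S. f s c * cnj (g s c'))"
  shows "\<Phi> X $$ (i, j) = (\<Sum>s\<in>S. \<Sum>r<m. (\<Sum>c<n. K r i c * f s c) * cnj (\<Sum>c'<n. K r j c' * g s c'))"
proof -
  have "\<Phi> X $$ (i, j) = (\<Sum>r<m. \<Sum>c<n. \<Sum>c'<n. K r i c * (\<Sum>s\<in>S. f s c * cnj (g s c')) * cnj (K r j c'))"
    unfolding kr[OF X i j] using Xe by simp
  also have "\<dots> = (\<Sum>r<m. \<Sum>c<n. \<Sum>c'<n. \<Sum>s\<in>S. K r i c * f s c * (cnj (K r j c') * cnj (g s c')))"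
    by (simp add: sum_distrib_left sum_distrib_right mult_ac)
  also have "\<dots> = (\<Sum>s\<in>S. \<Sum>r<m. \<Sum>c<n. \<Sum>c'<n. K r i c * f s c * (cnj (K r j c') * cnj (g s c')))"
    unfolding sum.cartesian_product
    by (rule sum.reindex_bij_witness[where i="\<lambda>(s,r,c,c'). (r,c,c',s)" and j="\<lambda>(r,c,c',s). (s,r,c,c')"]) auto
  also have "\<dots> = (\<Sum>s\<in>S. \<Sum>r<m. (\<Sum>c<n. K r i c * f s c) * cnj (\<Sum>c'<n. K r j c' * g s c'))"
    by (simp add: sum_product cnj_sum)
  finally show ?thesis .
qed

lemma mod_lt: "I < n * (n::nat) \<Longrightarrow> I mod n < n"
  by (cases "n = 0") simp_all

lemma div_lt: "I < n * (n::nat) \<Longrightarrow> I div n < n"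
  by (simp add: less_mult_imp_div_less)

lemma sum_divmod: "(\<Sum>I<n * (n::nat). f (I div n) (I mod n)) = (\<Sum>x<n. \<Sum>y<n. f x y)"
proof -
  have "(\<Sum>I<n * n. f (I div n) (I mod n)) = (\<Sum>(x, y)\<in>{..<n} \<times> {..<n}. f x y)"
    by (rule sum.reindex_bij_witness[where i="\<lambda>(x, y). x * n + y" and j="\<lambda>I. (I div n, I mod n)"])
      (auto simp: mod_lt div_lt idx_less)
  thus ?thesis by (simp add: sum.cartesian_product)
qed

lemma gram_dual:
  "(\<Sum>I\<in>A. \<Sum>J\<in>A. (\<Sum>r\<in>R. V I r * cnj (V J r)) * (\<Sum>r\<in>R. V J r * cnj (V I r)))
   = (\<Sum>r\<in>R. \<Sum>r'\<in>R. (\<Sum>I\<in>A. V I r * cnj (V I r')) * (\<Sum>I\<in>A. V I r' * cnj (V I r)))"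
  unfolding sum_product sum.cartesian_product
  by (rule sum.reindex_bij_witness[where i="\<lambda>(r,r',I,J). (I,J,r,r')" and j="\<lambda>(I,J,r,r'). (r,r',I,J)"])
     (auto simp: mult_ac)

lemma mix:
  fixes n :: nat
  assumes fin: "finite A"
    and h: "\<And>b b'. b < n \<Longrightarrow> b' < n \<Longrightarrow> (\<Sum>a\<in>A. h a b * cnj (h a b')) = (if b = b' then c else 0)"
  shows "(\<Sum>a\<in>A. (\<Sum>b<n. F b * h a b) * cnj (\<Sum>b<n. G b * h a b)) = c * (\<Sum>b<n. F b * cnj (G b))"
proof -
  have "(\<Sum>a\<in>A. (\<Sum>b<n. F b * h a b) * cnj (\<Sum>b<n. G b * h a b))
      = (\<Sum>a\<in>A. \<Sum>b<n. \<Sum>b'<n. F b * cnj (G b') * (h a b * cnj (h a b')))"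
    by (simp add: sum_product mult_ac)
  also have "\<dots> = (\<Sum>b<n. \<Sum>b'<n. \<Sum>a\<in>A. F b * cnj (G b') * (h a b * cnj (h a b')))"
    by (rule sum_swap3[symmetric])
  also have "\<dots> = (\<Sum>b<n. \<Sum>b'<n. F b * cnj (G b') * (if b = b' then c else 0))"
    by (intro sum.cong refl) (simp add: sum_distrib_left[symmetric] h)
  also have "\<dots> = (\<Sum>b<n. F b * cnj (G b) * c)"
  proof (rule sum.cong[OF refl])
    fix b assume b: "b \<in> {..<n}"
    have "(\<Sum>b'<n. F b * cnj (G b') * (if b = b' then c else 0)) = (\<Sum>b'<n. if b' = b then F b * cnj (G b') * c else 0)"
      by (intro sum.cong) auto
    also have "\<dots> = F b * cnj (G b) * c" using b sum_if_eq[of b n "\<lambda>b'. F b * cnj (G b') * c"] by simp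
    finally show "(\<Sum>b'<n. F b * cnj (G b') * (if b = b' then c else 0)) = F b * cnj (G b) * c" .
  qed
  finally show ?thesis by (simp add: sum_distrib_left mult_ac)
qed

lemma ctrace_sq:
  assumes "A \<in> carrier_mat N N"
  shows "ctrace (A * A) = (\<Sum>I<N. \<Sum>J<N. A $$ (I, J) * A $$ (J, I))"
  unfolding ctrace_def using assms
  by (simp add: scalar_prod_def atLeast0LessThan)



lemma mix2:
  fixes n :: nat
  assumes fin: "finite A"
    and h: "\<And>b b'. b < n \<Longrightarrow> b' < n \<Longrightarrow> (\<Sum>a\<in>A. h a b * cnj (h a b')) = (if b = b' then c else 0)"
  shows "(\<Sum>a\<in>A. (\<Sum>b<n. h a b * F b) * cnj (\<Sum>b<n. h a b * G b)) = c * (\<Sum>b<n. F b * cnj (G b))"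
proof -
  have "(\<Sum>a\<in>A. (\<Sum>b<n. h a b * F b) * cnj (\<Sum>b<n. h a b * G b))
     = (\<Sum>a\<in>A. (\<Sum>b<n. F b * h a b) * cnj (\<Sum>b<n. G b * h a b))"
    by (simp add: mult.commute)
  also have "\<dots> = c * (\<Sum>b<n. F b * cnj (G b))" by (rule mix[OF fin h])
  finally show ?thesis .
qed

lemma jam_kraus:
  assumes kr: "\<And>X i j. X \<in> carrier_mat n n \<Longrightarrow> i < n \<Longrightarrow> j < n \<Longrightarrow>
       \<Phi> X $$ (i, j) = (\<Sum>r<m. \<Sum>c<n. \<Sum>c'<n. K r i c * X $$ (c, c') * cnj (K r j c'))"
    and I: "I < n * n" and J: "J < n * n"
  shows "apply_first \<Phi> n n (outer (phi_plus n)) $$ (I, J)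
    = (\<Sum>r<m. (K r (I div n) (I mod n) * complex_of_real (1 / sqrt (real n)))
             * cnj (K r (J div n) (J mod n) * complex_of_real (1 / sqrt (real n))))"
proof -
  let ?M = "mat n n (\<lambda>(a, a'). outer (phi_plus n) $$ (a * n + I mod n, a' * n + J mod n))"
  have Mc: "?M \<in> carrier_mat n n" by simp
  have Xe: "?M $$ (c, c') = (\<Sum>s\<in>{()}. phi_plus n $ (c * n + I mod n) * cnj (phi_plus n $ (c' * n + J mod n)))"
    if "c < n" "c' < n" for c c'
    using that idx_less[OF that(1) mod_lt[OF I]] idx_less[OF that(2) mod_lt[OF J]] by (simp add: outer_def)
  have sK: "(\<Sum>c<n. K r x c * phi_plus n $ (c * n + y)) = K r x y * complex_of_real (1 / sqrt (real n))"
    if "y < n" for r x y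
  proof -
    have "(\<Sum>c<n. K r x c * phi_plus n $ (c * n + y)) = (\<Sum>c<n. if c = y then K r x c * complex_of_real (1 / sqrt (real n)) else 0)"
      by (intro sum.cong refl) (use that in \<open>simp add: phi_plus_idx\<close>)
    also have "\<dots> = K r x y * complex_of_real (1 / sqrt (real n))"
      using that sum_if_eq[OF that, of "\<lambda>c. K r x c * complex_of_real (1 / sqrt (real n))"] by simp
    finally show ?thesis .
  qed
  have "apply_first \<Phi> n n (outer (phi_plus n)) $$ (I, J) = \<Phi> ?M $$ (I div n, J div n)"
    unfolding apply_first_def using I J by simp
  also have "\<dots> = (\<Sum>s\<in>{()}. \<Sum>r<m. (\<Sum>c<n. K r (I div n) c * phi_plus n $ (c * n + I mod n))
        * cnj (\<Sum>c'<n. K r (J div n) c' * phi_plus n $ (c' * n + J mod n)))"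
    by (rule kraus_apply[OF kr Mc div_lt[OF I] div_lt[OF J] Xe])
  also have "\<dots> = (\<Sum>r<m. (K r (I div n) (I mod n) * complex_of_real (1 / sqrt (real n)))
             * cnj (K r (J div n) (J mod n) * complex_of_real (1 / sqrt (real n))))"
    using sK mod_lt[OF I] mod_lt[OF J] by simp
  finally show ?thesis .
qed

lemma trace_sq_gram:
  assumes A: "A \<in> carrier_mat N N"
    and e: "\<And>I J. I < N \<Longrightarrow> J < N \<Longrightarrow> A $$ (I, J) = (\<Sum>r\<in>R. V I r * cnj (V J r))"
  shows "ctrace (A * A) = (\<Sum>r\<in>R. \<Sum>r'\<in>R. (\<Sum>I<N. V I r * cnj (V I r')) * (\<Sum>I<N. V I r' * cnj (V I r)))"
proof -
  have "ctrace (A * A) = (\<Sum>I<N. \<Sum>J<N. (\<Sum>r\<in>R. V I r * cnj (V J r)) * (\<Sum>r\<in>R. V J r * cnj (V I r)))"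
    unfolding ctrace_sq[OF A] using e by simp
  also have "\<dots> = (\<Sum>r\<in>R. \<Sum>r'\<in>R. (\<Sum>I<N. V I r * cnj (V I r')) * (\<Sum>I<N. V I r' * cnj (V I r)))"
    by (rule gram_dual)
  finally show ?thesis .
qed

lemma purity_pos:
  fixes R :: "'a \<Rightarrow> 'a \<Rightarrow> complex"
  assumes fin: "finite A" and herm: "\<And>a b. R b a = cnj (R a b)" and tr: "(\<Sum>a\<in>A. R a a) = 1"
  shows "Re (\<Sum>a\<in>A. \<Sum>b\<in>A. R a b * R b a) > 0"
proof -
  have t: "R a b * R b a = complex_of_real ((cmod (R a b))^2)" for a b
  proof -
    have "R a b * R b a = R a b * cnj (R a b)" by (simp only: herm[of b a])
    also have "\<dots> = complex_of_real ((cmod (R a b))^2)" by (rule complex_norm_square[symmetric])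
    finally show ?thesis .
  qed
  have eq: "Re (\<Sum>a\<in>A. \<Sum>b\<in>A. R a b * R b a) = (\<Sum>a\<in>A. \<Sum>b\<in>A. (cmod (R a b))^2)"
    unfolding t by (simp add: Re_sum)
  have nn: "(\<Sum>a\<in>A. \<Sum>b\<in>A. (cmod (R a b))^2) \<ge> 0" by (intro sum_nonneg) auto
  show ?thesis
  proof (rule ccontr)
    assume "\<not> ?thesis"
    hence z: "(\<Sum>a\<in>A. \<Sum>b\<in>A. (cmod (R a b))^2) = 0" using eq nn by simp
    have "\<forall>a\<in>A. (\<Sum>b\<in>A. (cmod (R a b))^2) = 0"
      using z fin by (subst (asm) sum_nonneg_eq_0_iff) (auto intro: sum_nonneg)
    hence "\<forall>a\<in>A. \<forall>b\<in>A. (cmod (R a b))^2 = 0"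
      using fin by (subst (asm) sum_nonneg_eq_0_iff) auto
    hence "\<forall>a\<in>A. R a a = 0" by auto
    hence "(\<Sum>a\<in>A. R a a) = 0" by simp
    thus False using tr by simp
  qed
qed



theorem mainTheorem3:
  fixes n :: nat and \<Phi>1 \<Phi>2 :: "complex mat \<Rightarrow> complex mat" and \<psi> :: "complex vec"
  assumes "quantum_channel n \<Phi>1"
    and "quantum_channel n \<Phi>2"
    and "maximally_entangled n \<psi>"
  shows "- ln (1 - \<bar>exp (- renyi2_map n \<Phi>1) - exp (- renyi2_map n \<Phi>2)\<bar>)
           \<le> renyi2 (tensor_channel \<Phi>1 \<Phi>2 n (outer \<psi>))"
proof -
  note Q1 = assms(1) and Q2 = assms(2)
  have psi: "\<psi> \<in> carrier_vec (n * n)" and uv: "unit_vector \<psi>"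
    and pt2: "ptrace_second n n (outer \<psi>) = (1 / of_nat n) \<cdot>\<^sub>m 1\<^sub>m n"
    and pt1: "ptrace_first n n (outer \<psi>) = (1 / of_nat n) \<cdot>\<^sub>m 1\<^sub>m n"
    using assms(3) unfolding maximally_entangled_def by auto
  have dpsi: "dim_vec \<psi> = n * n" using psi by simp
  have n: "n > 0"
  proof (rule ccontr)
    assume "\<not> n > 0"
    hence "n = 0" by simp
    thus False using uv dpsi unfolding unit_vector_def by simp
  qed
  obtain m1 :: nat and K where kr1: "\<And>X i j. X \<in> carrier_mat n n \<Longrightarrow> i < n \<Longrightarrow> j < n \<Longrightarrow>
       \<Phi>1 X $$ (i, j) = (\<Sum>r<m1. \<Sum>c<n. \<Sum>c'<n. K r i c * X $$ (c, c') * cnj (K r j c'))"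
    and cm1: "\<And>c c'. c < n \<Longrightarrow> c' < n \<Longrightarrow> (\<Sum>r<m1. \<Sum>i<n. K r i c * cnj (K r i c')) = (if c = c' then 1 else 0)"
    by (rule kraus[OF Q1]) (rule that, assumption, assumption)
  obtain m2 :: nat and L where kr2: "\<And>X i j. X \<in> carrier_mat n n \<Longrightarrow> i < n \<Longrightarrow> j < n \<Longrightarrow>
       \<Phi>2 X $$ (i, j) = (\<Sum>r<m2. \<Sum>c<n. \<Sum>c'<n. L r i c * X $$ (c, c') * cnj (L r j c'))"
    and cm2: "\<And>c c'. c < n \<Longrightarrow> c' < n \<Longrightarrow> (\<Sum>r<m2. \<Sum>i<n. L r i c * cnj (L r i c')) = (if c = c' then 1 else 0)"
    by (rule kraus[OF Q2]) (rule that, assumption, assumption)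
  have PT2: "(\<Sum>b<n. \<psi> $ (a * n + b) * cnj (\<psi> $ (a' * n + b))) = (if a = a' then 1 / of_nat n else 0)"
    if a: "a < n" and a': "a' < n" for a a'
  proof -
    have "ptrace_second n n (outer \<psi>) $$ (a, a') = ((1 / of_nat n) \<cdot>\<^sub>m 1\<^sub>m n) $$ (a, a')" using pt2 by simp
    moreover have "ptrace_second n n (outer \<psi>) $$ (a, a') = (\<Sum>b<n. \<psi> $ (a * n + b) * cnj (\<psi> $ (a' * n + b)))"
      unfolding ptrace_second_def using a a' idx_less[OF a] idx_less[OF a'] dpsi
      by (simp add: outer_def)
    ultimately show ?thesis using a a' by simp
  qed
  have PT1: "(\<Sum>a<n. \<psi> $ (a * n + b) * cnj (\<psi> $ (a * n + b'))) = (if b = b' then 1 / of_nat n else 0)"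
    if b: "b < n" and b': "b' < n" for b b'
  proof -
    have "ptrace_first n n (outer \<psi>) $$ (b, b') = ((1 / of_nat n) \<cdot>\<^sub>m 1\<^sub>m n) $$ (b, b')" using pt1 by simp
    moreover have "ptrace_first n n (outer \<psi>) $$ (b, b') = (\<Sum>a<n. \<psi> $ (a * n + b) * cnj (\<psi> $ (a * n + b')))"
      unfolding ptrace_first_def using b b' dpsi
      by (simp add: outer_def idx_less)
    ultimately show ?thesis using b b' by simp
  qed
  define \<xi> where "\<xi> = (\<lambda>a y s. \<Sum>b<n. L s y b * \<psi> $ (a * n + b))"
  define \<omega> where "\<omega> = (\<lambda>x r y s. \<Sum>a<n. K r x a * \<xi> a y s)"
  define w where "w = (\<lambda>I r s. \<omega> (I div n) r (I mod n) s)"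
  define Y where "Y = apply_second \<Phi>2 n n (outer \<psi>)"
  define \<rho> where "\<rho> = tensor_channel \<Phi>1 \<Phi>2 n (outer \<psi>)"
  have \<rho>Y: "\<rho> = apply_first \<Phi>1 n n Y" unfolding \<rho>_def Y_def tensor_channel_def ..
  have Yent: "Y $$ (p, q) = (\<Sum>s<m2. \<xi> (p div n) (p mod n) s * cnj (\<xi> (q div n) (q mod n) s))"
    if p: "p < n * n" and q: "q < n * n" for p q
  proof -
    let ?M = "mat n n (\<lambda>(b, b'). outer \<psi> $$ ((p div n) * n + b, (q div n) * n + b'))"
    have Mc: "?M \<in> carrier_mat n n" by simp
    have Xe: "?M $$ (c, c') = (\<Sum>s\<in>{()}. \<psi> $ ((p div n) * n + c) * cnj (\<psi> $ ((q div n) * n + c')))"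
      if "c < n" "c' < n" for c c'
      using that idx_less[OF div_lt[OF p] that(1)] idx_less[OF div_lt[OF q] that(2)] dpsi
      by (simp add: outer_def)
    have "Y $$ (p, q) = \<Phi>2 ?M $$ (p mod n, q mod n)"
      unfolding Y_def apply_second_def using p q by simp
    also have "\<dots> = (\<Sum>s\<in>{()}. \<Sum>r<m2. (\<Sum>c<n. L r (p mod n) c * \<psi> $ ((p div n) * n + c))
        * cnj (\<Sum>c'<n. L r (q mod n) c' * \<psi> $ ((q div n) * n + c')))"
      by (rule kraus_apply[OF kr2 Mc mod_lt[OF p] mod_lt[OF q] Xe])
    also have "\<dots> = (\<Sum>s<m2. \<xi> (p div n) (p mod n) s * cnj (\<xi> (q div n) (q mod n) s))"
      unfolding \<xi>_def by simp
    finally show ?thesis .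
  qed
  have \<rho>ent: "\<rho> $$ (I, J) = (\<Sum>s<m2. \<Sum>r<m1. w I r s * cnj (w J r s))"
    if I: "I < n * n" and J: "J < n * n" for I J
  proof -
    let ?M = "mat n n (\<lambda>(a, a'). Y $$ (a * n + I mod n, a' * n + J mod n))"
    have Mc: "?M \<in> carrier_mat n n" by simp
    have Xe: "?M $$ (c, c') = (\<Sum>s\<in>{..<m2}. \<xi> c (I mod n) s * cnj (\<xi> c' (J mod n) s))"
      if "c < n" "c' < n" for c c'
      using that Yent[OF idx_less[OF that(1) mod_lt[OF I]] idx_less[OF that(2) mod_lt[OF J]]]
        mod_lt[OF I] mod_lt[OF J] by simp
    have "\<rho> $$ (I, J) = \<Phi>1 ?M $$ (I div n, J div n)"
      unfolding \<rho>Y apply_first_def using I J by simp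
    also have "\<dots> = (\<Sum>s\<in>{..<m2}. \<Sum>r<m1. (\<Sum>c<n. K r (I div n) c * \<xi> c (I mod n) s)
        * cnj (\<Sum>c'<n. K r (J div n) c' * \<xi> c' (J mod n) s))"
      by (rule kraus_apply[OF kr1 Mc div_lt[OF I] div_lt[OF J] Xe])
    also have "\<dots> = (\<Sum>s<m2. \<Sum>r<m1. w I r s * cnj (w J r s))"
      unfolding w_def \<omega>_def by simp
    finally show ?thesis .
  qed
  define RX where "RX = (\<lambda>a b. \<Sum>r<m1. \<Sum>s<m2. w a r s * cnj (w b r s))"
  define RY where "RY = (\<lambda>a b. \<Sum>x<n * n. \<Sum>s<m2. w x a s * cnj (w x b s))"
  define RZ where "RZ = (\<lambda>a b. \<Sum>x<n * n. \<Sum>r<m1. w x r a * cnj (w x r b))"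
  define Nn where "Nn = (\<Sum>x<n * n. \<Sum>r<m1. \<Sum>s<m2. w x r s * cnj (w x r s))"
  define PX where "PX = Re (\<Sum>a<n * n. \<Sum>b<n * n. RX a b * RX b a)"
  define PY where "PY = Re (\<Sum>a<m1. \<Sum>b<m1. RY a b * RY b a)"
  define PZ where "PZ = Re (\<Sum>a<m2. \<Sum>b<m2. RZ a b * RZ b a)"
  have A1: "PX + PY \<le> Re (Nn * Nn) + PZ"
    using audenaert_sum[where w=w and X="{..<n * n}" and Y="{..<m1}" and Z="{..<m2}"]
    unfolding PX_def PY_def PZ_def RX_def RY_def RZ_def Nn_def by (simp only:)
  have sw1: "(\<Sum>s<m2. \<Sum>r<m1. w a r s * cnj (w b r s)) = RX a b" for a b
    unfolding RX_def by (rule sum.swap)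
  have sw2: "(\<Sum>x<n * n. \<Sum>s<m2. \<Sum>r<m1. w x r s * cnj (w x r s)) = Nn"
    unfolding Nn_def by (rule sum.cong[OF refl]) (rule sum.swap)
  have NnRX: "Nn = (\<Sum>x<n * n. RX x x)" unfolding Nn_def RX_def by simp
  have A2: "PX + PZ \<le> Re (Nn * Nn) + PY"
    using audenaert_sum[where w="\<lambda>I s r. w I r s" and X="{..<n * n}" and Y="{..<m2}" and Z="{..<m1}", unfolded sw1]
    unfolding PX_def PY_def PZ_def RY_def RZ_def NnRX by (simp only:)
  define c0 where "c0 = complex_of_real (1 / sqrt (real n))"
  have c0sq: "c0 * cnj c0 = 1 / of_nat n" unfolding c0_def using inv_sqrt_sq[OF n] .
  define \<eta> where "\<eta> = (\<lambda>x r b. \<Sum>a<n. K r x a * \<psi> $ (a * n + b))"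
  have \<omega>alt: "\<omega> x r y s = (\<Sum>b<n. L s y b * \<eta> x r b)" for x r y s
  proof -
    have "\<omega> x r y s = (\<Sum>a<n. \<Sum>b<n. L s y b * (K r x a * \<psi> $ (a * n + b)))"
      unfolding \<omega>_def \<xi>_def by (simp add: sum_distrib_left mult_ac)
    also have "\<dots> = (\<Sum>b<n. \<Sum>a<n. L s y b * (K r x a * \<psi> $ (a * n + b)))" by (rule sum.swap)
    also have "\<dots> = (\<Sum>b<n. L s y b * \<eta> x r b)" unfolding \<eta>_def by (simp add: sum_distrib_left)
    finally show ?thesis .
  qed
  have comp1: "(\<Sum>p\<in>{..<n} \<times> {..<m1}. (case p of (x, r) \<Rightarrow> K r x a) * cnj (case p of (x, r) \<Rightarrow> K r x a'))
      = (if a = a' then 1 else 0)" if "a < n" "a' < n" for a a'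
  proof -
    have "(\<Sum>p\<in>{..<n} \<times> {..<m1}. (case p of (x, r) \<Rightarrow> K r x a) * cnj (case p of (x, r) \<Rightarrow> K r x a'))
       = (\<Sum>x<n. \<Sum>r<m1. K r x a * cnj (K r x a'))"
      by (simp add: sum.cartesian_product case_prod_beta)
    also have "\<dots> = (\<Sum>r<m1. \<Sum>x<n. K r x a * cnj (K r x a'))" by (rule sum.swap)
    finally show ?thesis using cm1[OF that] by simp
  qed
  have comp2: "(\<Sum>p\<in>{..<n} \<times> {..<m2}. (case p of (y, s) \<Rightarrow> L s y b) * cnj (case p of (y, s) \<Rightarrow> L s y b'))
      = (if b = b' then 1 else 0)" if "b < n" "b' < n" for b b'
  proof -
    have "(\<Sum>p\<in>{..<n} \<times> {..<m2}. (case p of (y, s) \<Rightarrow> L s y b) * cnj (case p of (y, s) \<Rightarrow> L s y b'))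
       = (\<Sum>y<n. \<Sum>s<m2. L s y b * cnj (L s y b'))"
      by (simp add: sum.cartesian_product case_prod_beta)
    also have "\<dots> = (\<Sum>s<m2. \<Sum>y<n. L s y b * cnj (L s y b'))" by (rule sum.swap)
    finally show ?thesis using cm2[OF that] by simp
  qed
  have RYval: "RY r r' = (\<Sum>x<n. 1 / of_nat n * (\<Sum>a<n. K r x a * cnj (K r' x a)))" for r r'
  proof -
    have "RY r r' = (\<Sum>x<n. \<Sum>y<n. \<Sum>s<m2. \<omega> x r y s * cnj (\<omega> x r' y s))"
      unfolding RY_def w_def using sum_divmod[of "\<lambda>x y. \<Sum>s<m2. \<omega> x r y s * cnj (\<omega> x r' y s)" n] by simp
    also have "\<dots> = (\<Sum>x<n. \<Sum>b<n. \<eta> x r b * cnj (\<eta> x r' b))"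
    proof (rule sum.cong[OF refl])
      fix x
      have "(\<Sum>y<n. \<Sum>s<m2. \<omega> x r y s * cnj (\<omega> x r' y s))
         = (\<Sum>p\<in>{..<n} \<times> {..<m2}. (\<Sum>b<n. (case p of (y, s) \<Rightarrow> L s y b) * \<eta> x r b)
              * cnj (\<Sum>b<n. (case p of (y, s) \<Rightarrow> L s y b) * \<eta> x r' b))"
        unfolding \<omega>alt by (simp add: sum.cartesian_product case_prod_beta)
      also have "\<dots> = 1 * (\<Sum>b<n. \<eta> x r b * cnj (\<eta> x r' b))"
        by (rule mix2[OF _ comp2]) simp
      finally show "(\<Sum>y<n. \<Sum>s<m2. \<omega> x r y s * cnj (\<omega> x r' y s)) = (\<Sum>b<n. \<eta> x r b * cnj (\<eta> x r' b))"
        by simp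
    qed
    also have "\<dots> = (\<Sum>x<n. 1 / of_nat n * (\<Sum>a<n. K r x a * cnj (K r' x a)))"
    proof (rule sum.cong[OF refl])
      fix x
      show "(\<Sum>b<n. \<eta> x r b * cnj (\<eta> x r' b)) = 1 / of_nat n * (\<Sum>a<n. K r x a * cnj (K r' x a))"
        unfolding \<eta>_def by (rule mix[OF _ PT2]) simp
    qed
    finally show ?thesis .
  qed
  have RZval: "RZ s s' = (\<Sum>y<n. 1 / of_nat n * (\<Sum>b<n. L s y b * cnj (L s' y b)))" for s s'
  proof -
    have "RZ s s' = (\<Sum>x<n. \<Sum>y<n. \<Sum>r<m1. \<omega> x r y s * cnj (\<omega> x r y s'))"
      unfolding RZ_def w_def using sum_divmod[of "\<lambda>x y. \<Sum>r<m1. \<omega> x r y s * cnj (\<omega> x r y s')" n] by simp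
    also have "\<dots> = (\<Sum>y<n. \<Sum>x<n. \<Sum>r<m1. \<omega> x r y s * cnj (\<omega> x r y s'))" by (rule sum.swap)
    also have "\<dots> = (\<Sum>y<n. \<Sum>a<n. \<xi> a y s * cnj (\<xi> a y s'))"
    proof (rule sum.cong[OF refl])
      fix y
      have "(\<Sum>x<n. \<Sum>r<m1. \<omega> x r y s * cnj (\<omega> x r y s'))
         = (\<Sum>p\<in>{..<n} \<times> {..<m1}. (\<Sum>a<n. (case p of (x, r) \<Rightarrow> K r x a) * \<xi> a y s)
              * cnj (\<Sum>a<n. (case p of (x, r) \<Rightarrow> K r x a) * \<xi> a y s'))"
        unfolding \<omega>_def by (simp add: sum.cartesian_product case_prod_beta)
      also have "\<dots> = 1 * (\<Sum>a<n. \<xi> a y s * cnj (\<xi> a y s'))"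
        by (rule mix2[OF _ comp1]) simp
      finally show "(\<Sum>x<n. \<Sum>r<m1. \<omega> x r y s * cnj (\<omega> x r y s')) = (\<Sum>a<n. \<xi> a y s * cnj (\<xi> a y s'))"
        by simp
    qed
    also have "\<dots> = (\<Sum>y<n. 1 / of_nat n * (\<Sum>b<n. L s y b * cnj (L s' y b)))"
    proof (rule sum.cong[OF refl])
      fix y
      show "(\<Sum>a<n. \<xi> a y s * cnj (\<xi> a y s')) = 1 / of_nat n * (\<Sum>b<n. L s y b * cnj (L s' y b))"
        unfolding \<xi>_def by (rule mix[OF _ PT1]) simp
    qed
    finally show ?thesis .
  qed
  have \<rho>c: "\<rho> \<in> carrier_mat (n * n) (n * n)" unfolding \<rho>Y apply_first_def by simp
  have \<rho>RX: "\<rho> $$ (I, J) = RX I J" if "I < n * n" "J < n * n" for I J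
    using \<rho>ent[OF that] sw1 by simp
  have trq: "Re (ctrace (\<rho> * \<rho>)) = PX"
  proof -
    have "ctrace (\<rho> * \<rho>) = (\<Sum>I<n * n. \<Sum>J<n * n. RX I J * RX J I)"
      unfolding ctrace_sq[OF \<rho>c] by (intro sum.cong refl) (simp add: \<rho>RX)
    thus ?thesis unfolding PX_def by simp
  qed
  have tr1: "Re (ctrace (jamiolkowski n \<Phi>1 * jamiolkowski n \<Phi>1)) = PY"
  proof -
    have Jc: "jamiolkowski n \<Phi>1 \<in> carrier_mat (n * n) (n * n)"
      unfolding jamiolkowski_def apply_first_def by simp
    have "ctrace (jamiolkowski n \<Phi>1 * jamiolkowski n \<Phi>1)
      = (\<Sum>r\<in>{..<m1}. \<Sum>r'\<in>{..<m1}. (\<Sum>I<n * n. (K r (I div n) (I mod n) * c0) * cnj (K r' (I div n) (I mod n) * c0))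
          * (\<Sum>I<n * n. (K r' (I div n) (I mod n) * c0) * cnj (K r (I div n) (I mod n) * c0)))"
      by (rule trace_sq_gram[OF Jc]) (unfold jamiolkowski_def c0_def, rule jam_kraus[OF kr1])
    also have "\<dots> = (\<Sum>r<m1. \<Sum>r'<m1. RY r r' * RY r' r)"
    proof -
      have g: "(\<Sum>I<n * n. (K r (I div n) (I mod n) * c0) * cnj (K r' (I div n) (I mod n) * c0)) = RY r r'" for r r'
      proof -
        have "(\<Sum>I<n * n. (K r (I div n) (I mod n) * c0) * cnj (K r' (I div n) (I mod n) * c0))
          = (\<Sum>x<n. \<Sum>y<n. (K r x y * c0) * cnj (K r' x y * c0))"
          using sum_divmod[of "\<lambda>x y. (K r x y * c0) * cnj (K r' x y * c0)" n] by simp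
        also have "\<dots> = (\<Sum>x<n. 1 / of_nat n * (\<Sum>a<n. K r x a * cnj (K r' x a)))"
          by (simp add: sum_distrib_left c0sq[symmetric] mult_ac)
        finally show ?thesis using RYval by simp
      qed
      show ?thesis unfolding g by simp
    qed
    finally show ?thesis unfolding PY_def by simp
  qed
  have tr2: "Re (ctrace (jamiolkowski n \<Phi>2 * jamiolkowski n \<Phi>2)) = PZ"
  proof -
    have Jc: "jamiolkowski n \<Phi>2 \<in> carrier_mat (n * n) (n * n)"
      unfolding jamiolkowski_def apply_first_def by simp
    have "ctrace (jamiolkowski n \<Phi>2 * jamiolkowski n \<Phi>2)
      = (\<Sum>r\<in>{..<m2}. \<Sum>r'\<in>{..<m2}. (\<Sum>I<n * n. (L r (I div n) (I mod n) * c0) * cnj (L r' (I div n) (I mod n) * c0))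
          * (\<Sum>I<n * n. (L r' (I div n) (I mod n) * c0) * cnj (L r (I div n) (I mod n) * c0)))"
      by (rule trace_sq_gram[OF Jc]) (unfold jamiolkowski_def c0_def, rule jam_kraus[OF kr2])
    also have "\<dots> = (\<Sum>r<m2. \<Sum>r'<m2. RZ r r' * RZ r' r)"
    proof -
      have g: "(\<Sum>I<n * n. (L r (I div n) (I mod n) * c0) * cnj (L r' (I div n) (I mod n) * c0)) = RZ r r'" for r r'
      proof -
        have "(\<Sum>I<n * n. (L r (I div n) (I mod n) * c0) * cnj (L r' (I div n) (I mod n) * c0))
          = (\<Sum>x<n. \<Sum>y<n. (L r x y * c0) * cnj (L r' x y * c0))"
          using sum_divmod[of "\<lambda>x y. (L r x y * c0) * cnj (L r' x y * c0)" n] by simp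
        also have "\<dots> = (\<Sum>x<n. 1 / of_nat n * (\<Sum>a<n. L r x a * cnj (L r' x a)))"
          by (simp add: sum_distrib_left c0sq[symmetric] mult_ac)
        finally show ?thesis using RZval by simp
      qed
      show ?thesis unfolding g by simp
    qed
    finally show ?thesis unfolding PZ_def by simp
  qed
  have Nn1: "Nn = 1"
  proof -
    have "Nn = (\<Sum>s<m2. RZ s s)" unfolding Nn_def RZ_def by (rule sum_swap3)
    also have "\<dots> = (\<Sum>s<m2. \<Sum>y<n. 1 / of_nat n * (\<Sum>b<n. L s y b * cnj (L s y b)))"
      using RZval by simp
    also have "\<dots> = 1 / of_nat n * (\<Sum>s<m2. \<Sum>y<n. \<Sum>b<n. L s y b * cnj (L s y b))"
      by (simp add: sum_distrib_left)
    also have "(\<Sum>s<m2. \<Sum>y<n. \<Sum>b<n. L s y b * cnj (L s y b)) = (\<Sum>b<n. \<Sum>s<m2. \<Sum>y<n. L s y b * cnj (L s y b))"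
      by (rule sum_swap3)
    also have "\<dots> = (\<Sum>b<n. 1)" using cm2 by simp
    finally show ?thesis using n by simp
  qed
  have PXpos: "PX > 0" unfolding PX_def
  proof (rule purity_pos)
    show "(\<Sum>a<n * n. RX a a) = 1" using NnRX Nn1 by simp
  qed (auto simp: RX_def cnj_sum mult.commute)
  have PYpos: "PY > 0" unfolding PY_def
  proof (rule purity_pos)
    show "(\<Sum>a<m1. RY a a) = 1" unfolding Nn1[symmetric] Nn_def RY_def by (rule sum.swap)
  qed (auto simp: RY_def cnj_sum mult.commute)
  have PZpos: "PZ > 0" unfolding PZ_def
  proof (rule purity_pos)
    show "(\<Sum>a<m2. RZ a a) = 1" unfolding Nn1[symmetric] Nn_def RZ_def by (rule sum_swap3[symmetric])
  qed (auto simp: RZ_def cnj_sum mult.commute)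
  have e1: "exp (- renyi2_map n \<Phi>1) = PY"
    unfolding renyi2_map_def renyi2_def tr1 using PYpos by simp
  have e2: "exp (- renyi2_map n \<Phi>2) = PZ"
    unfolding renyi2_map_def renyi2_def tr2 using PZpos by simp
  have r: "renyi2 (tensor_channel \<Phi>1 \<Phi>2 n (outer \<psi>)) = - ln PX"
    unfolding renyi2_def \<rho>_def[symmetric] trq ..
  have le: "PX \<le> 1 - \<bar>PY - PZ\<bar>" using A1 A2 unfolding Nn1 by simp
  have "ln PX \<le> ln (1 - \<bar>PY - PZ\<bar>)" using le PXpos by simp
  thus ?thesis unfolding e1 e2 r by simp
qed

end
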